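(* Fix $c\in\mathcal{C}'$ with $\mathcal{S}(c)\setminus\{c\}\neq\emptyset$, and fix the values of all messages $\lambda_{c'\to s}(\mathbf{x}_s)$ with $c'\neq c$. Consider the function of the block $\boldsymbol\lambda_{c,\mathcal{S}(c)}=(\lambda_{c\to s}(\mathbf{x}_s))_{s\in\mathcal{S}(c)\setminus\{c\},\mathbf{x}_s}$ $$g_c(\boldsymbol\lambda_{c,\mathcal{S}(c)})=\max_{\mathbf{x}_c}\Big[\hat\theta_c(\mathbf{x}_c)-\sum_{s\in\mathcal{S}(c)\setminus\{c\}}\lambda_{c\to s}(\mathbf{x}_s)+\lambda_c(\mathbf{x}_c)\Big]+\sum_{s\in\mathcal{S}(c)\setminus\{c\}}\max_{\mathbf{x}_s}\Big[\hat\theta_s(\mathbf{x}_s)-\gamma_s(\mathbf{x}_s)+\lambda_s^{-c}(\mathbf{x}_s)+\lambda_{c\to s}(\mathbf{x}_s)\Big].$$ For all $s\in\mathcal{S}(c)\setminus\{c\}$ and all $\mathbf{x}_s$ let $$\lambda^*_{c\to s}(\mathbf{x}_s)=-\hat\theta_s(\mathbf{x}_s)+\gamma_s(\mathbf{x}_s)-\lambda_s^{-c}(\mathbf{x}_s)+\frac{1}{|\mathcal{S}(c)\setminus\{c\}|}\max_{\mathbf{x}_{c\setminus s}}\Big[\hat\theta_c(\mathbf{x}_c)+\lambda_c(\mathbf{x}_c)+\sum_{\hat s\in\mathcal{S}(c)\setminus\{c\}}\big(\hat\theta_{\hat s}(\mathbf{x}_{\hat s})-\gamma_{\hat s}(\mathbf{x}_{\hat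 s})+\lambda^{-c}_{\hat s}(\mathbf{x}_{\hat s})\big)\Big].$$ Then $\boldsymbol\lambda^*_{c,\mathcal{S}(c)}=(\lambda^*_{c\to s}(\mathbf{x}_s))_{s\in\mathcal{S}(c)\setminus\{c\},\mathbf{x}_s}$ is a minimiser of $g_c$ (over all real-valued blocks $\boldsymbol\lambda_{c,\mathcal{S}(c)}$).
   Context: Let $\mathcal{V}=\{1,\dots,n\}$; each variable $x_i$ takes values in a finite set $\mathrm{Vals}(X_i)$, and for $s\subseteq\mathcal{V}$ write $\mathbf{x}_s=(x_i)_{i\in s}$. Let $\mathcal{C}$ be a collection of subsets of $\mathcal{V}$ with potentials $\theta_c:\prod_{i\in c}\mathrm{Vals}(X_i)\to\mathbb{R}$, $c\in\mathcal{C}$. Let $\mathcal{C}'$ be a collection of subsets of $\mathcal{V}$ ("extended clusters") and for each $c\in\mathcal{C}'$ let $\mathcal{S}(c)$ be a collection of subsets of $c$ (possibly containing $c$ itself), such that $\mathcal{C}'\cup\bigcup_{c\in\mathcal{C}'}\mathcal{S}(c)\supseteq\mathcal{C}$. Put $\mathcal{T}=\mathcal{C}'\cup\bigcup_{c\in\mathcal{C}'}\mathcal{S}(c)$. Messages are real numbers $\lambda_{c\to s}(\mathbf{x}_s)$ for $c\in\mathcal{C}'$, $s\in\mathcal{S}(c)\setminus\{c\}$ and all $\mathbf{x}_s$. For $t\in\mathcal{T}$ define $\hat\theta_t(\mathbf{x}_t)=\mathbb{1}(t\in\mathcal{C})\theta_t(\mathbf{x}_t)$, $\gamma_t(\mathbf{x}_t)=\mathbb{1}(t\in\mathcal{C}')\sum_{\hat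 s\in\mathcal{S}(t)\setminus\{t\}}\lambda_{t\to\hat s}(\mathbf{x}_{\hat s})$, $\lambda_t(\mathbf{x}_t)=\sum_{c'\in\mathcal{C}':\,t\in\mathcal{S}(c')\setminus\{c'\}}\lambda_{c'\to t}(\mathbf{x}_t)$. For $c\in\mathcal{C}'$ and $s\in\mathcal{S}(c)\setminus\{c\}$ define $\lambda_s^{-c}(\mathbf{x}_s)=\sum_{\hat c\in\mathcal{C}':\,\hat c\neq c,\ s\in\mathcal{S}(\hat c)\setminus\{\hat c\}}\lambda_{\hat c\to s}(\mathbf{x}_s)$. *)

theory Defs
  imports Complex_Main "HOL-Library.FuncSet"
begin

text \<open>Assignments to a set s of variables are extensional functions in PiE s Vals.
Potentials theta t and messages lam c s are functions on assignments; they are always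
evaluated at the restriction of an assignment to their scope.\<close>

definition hat_theta :: "'v set set \<Rightarrow> ('v set \<Rightarrow> ('v \<Rightarrow> 'a) \<Rightarrow> real) \<Rightarrow> 'v set \<Rightarrow> ('v \<Rightarrow> 'a) \<Rightarrow> real" where
  "hat_theta C \<theta> t x = (if t \<in> C then \<theta> t (restrict x t) else 0)"

definition gamma :: "'v set set \<Rightarrow> ('v set \<Rightarrow> 'v set set) \<Rightarrow> ('v set \<Rightarrow> 'v set \<Rightarrow> ('v \<Rightarrow> 'a) \<Rightarrow> real)
    \<Rightarrow> 'v set \<Rightarrow> ('v \<Rightarrow> 'a) \<Rightarrow> real" where
  "gamma C' S lam t x = (if t \<in> C' then (\<Sum>s\<in>S t - {t}. lam t s (restrict x s)) else 0)"

definition lam_in :: "'v set set \<Rightarrow> ('v set \<Rightarrow> 'v set set) \<Rightarrow> ('v set \<Rightarrow> 'v set \<Rightarrow> ('v \<Rightarrow> 'a) \<Rightarrow> real)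
    \<Rightarrow> 'v set \<Rightarrow> ('v \<Rightarrow> 'a) \<Rightarrow> real" where
  "lam_in C' S lam t x = (\<Sum>c'\<in>{c'\<in>C'. t \<in> S c' - {c'}}. lam c' t (restrict x t))"

definition lam_minus :: "'v set set \<Rightarrow> ('v set \<Rightarrow> 'v set set) \<Rightarrow> ('v set \<Rightarrow> 'v set \<Rightarrow> ('v \<Rightarrow> 'a) \<Rightarrow> real)
    \<Rightarrow> 'v set \<Rightarrow> 'v set \<Rightarrow> ('v \<Rightarrow> 'a) \<Rightarrow> real" where
  "lam_minus C' S lam c s x = (\<Sum>c'\<in>{c'\<in>C'. c' \<noteq> c \<and> s \<in> S c' - {c'}}. lam c' s (restrict x s))"

definition upd_block :: "('v set \<Rightarrow> 'v set \<Rightarrow> ('v \<Rightarrow> 'a) \<Rightarrow> real) \<Rightarrow> 'v set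
    \<Rightarrow> ('v set \<Rightarrow> ('v \<Rightarrow> 'a) \<Rightarrow> real) \<Rightarrow> ('v set \<Rightarrow> 'v set \<Rightarrow> ('v \<Rightarrow> 'a) \<Rightarrow> real)" where
  "upd_block lam c \<mu> = (\<lambda>c' s. if c' = c then \<mu> s else lam c' s)"

definition g_c :: "('v \<Rightarrow> 'a set) \<Rightarrow> 'v set set \<Rightarrow> 'v set set \<Rightarrow> ('v set \<Rightarrow> 'v set set)
    \<Rightarrow> ('v set \<Rightarrow> ('v \<Rightarrow> 'a) \<Rightarrow> real) \<Rightarrow> ('v set \<Rightarrow> 'v set \<Rightarrow> ('v \<Rightarrow> 'a) \<Rightarrow> real) \<Rightarrow> 'v set
    \<Rightarrow> ('v set \<Rightarrow> ('v \<Rightarrow> 'a) \<Rightarrow> real) \<Rightarrow> real" where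
  "g_c Vals C C' S \<theta> lam c \<mu> =
    (let l = upd_block lam c \<mu> in
      Max ((\<lambda>x. hat_theta C \<theta> c x - (\<Sum>s\<in>S c - {c}. l c s (restrict x s)) + lam_in C' S l c x)
             ` PiE c Vals)
    + (\<Sum>s\<in>S c - {c}.
        Max ((\<lambda>x. hat_theta C \<theta> s x - gamma C' S l s x + lam_minus C' S l c s x + l c s (restrict x s))
             ` PiE s Vals)))"

definition lam_star :: "('v \<Rightarrow> 'a set) \<Rightarrow> 'v set set \<Rightarrow> 'v set set \<Rightarrow> ('v set \<Rightarrow> 'v set set)
    \<Rightarrow> ('v set \<Rightarrow> ('v \<Rightarrow> 'a) \<Rightarrow> real) \<Rightarrow> ('v set \<Rightarrow> 'v set \<Rightarrow> ('v \<Rightarrow> 'a) \<Rightarrow> real) \<Rightarrow> 'v set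
    \<Rightarrow> 'v set \<Rightarrow> ('v \<Rightarrow> 'a) \<Rightarrow> real" where
  "lam_star Vals C C' S \<theta> lam c s xs =
     - hat_theta C \<theta> s xs + gamma C' S lam s xs - lam_minus C' S lam c s xs
     + (1 / real (card (S c - {c}))) *
       Max ((\<lambda>x. hat_theta C \<theta> c x + lam_in C' S lam c x
                 + (\<Sum>s'\<in>S c - {c}. hat_theta C \<theta> s' x - gamma C' S lam s' x + lam_minus C' S lam c s' x))
            ` {x \<in> PiE c Vals. restrict x s = xs})"

end

theory Submission
  imports Defs
begin

lemma hat_theta_restrict: "hat_theta C \<theta> s (restrict x s) = hat_theta C \<theta> s x"
  by (simp add: hat_theta_def)

lemma lam_minus_restrict: "lam_minus C' S lam c s (restrict x s) = lam_minus C' S lam c s x"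
  by (simp add: lam_minus_def)

lemma gamma_restrict:
  assumes "\<And>c'. c' \<in> C' \<Longrightarrow> S c' \<subseteq> Pow c'"
  shows "gamma C' S lam s (restrict x s) = gamma C' S lam s x"
proof (cases "s \<in> C'")
  case True
  have "\<And>s'. s' \<in> S s - {s} \<Longrightarrow> restrict (restrict x s) s' = restrict x s'"
    using assms[OF True] by (auto simp: Int_absorb1)
  then show ?thesis using True by (simp add: gamma_def)
next
  case False then show ?thesis by (simp add: gamma_def)
qed

lemma restrict_PiE_sub:
  assumes "x \<in> PiE c Vals" "s \<subseteq> c"
  shows "restrict x s \<in> PiE s Vals"
  using assms by (auto simp: PiE_iff)

lemma extend_exists:
  assumes "xs \<in> PiE s Vals" "s \<subseteq> c" "\<And>i. Vals i \<noteq> {}"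
  shows "\<exists>x. x \<in> PiE c Vals \<and> restrict x s = xs"
proof -
  define x where "x = (\<lambda>v. if v \<in> s then xs v else if v \<in> c then (SOME a. a \<in> Vals v) else undefined)"
  have "x \<in> PiE c Vals"
    using assms by (auto simp: x_def PiE_iff some_in_eq extensional_def)
  moreover have "restrict x s = xs"
    using assms(1) by (auto simp: x_def PiE_iff extensional_def restrict_def)
  ultimately show ?thesis by blast
qed

theorem proposition1:
  fixes Vals :: "'v::finite \<Rightarrow> 'a set"
    and C C' :: "'v set set"
    and S :: "'v set \<Rightarrow> 'v set set"
    and \<theta> :: "'v set \<Rightarrow> ('v \<Rightarrow> 'a) \<Rightarrow> real"
    and lam :: "'v set \<Rightarrow> 'v set \<Rightarrow> ('v \<Rightarrow> 'a) \<Rightarrow> real"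
    and c :: "'v set"
  assumes vals_fin: "\<And>i. finite (Vals i)"
    and vals_ne: "\<And>i. Vals i \<noteq> {}"
    and S_sub: "\<And>c'. c' \<in> C' \<Longrightarrow> S c' \<subseteq> Pow c'"
    and C_cov: "C \<subseteq> C' \<union> (\<Union>c'\<in>C'. S c')"
    and c_in: "c \<in> C'"
    and S_ne: "S c - {c} \<noteq> {}"
  shows "\<forall>\<mu>. g_c Vals C C' S \<theta> lam c (lam_star Vals C C' S \<theta> lam c)
             \<le> g_c Vals C C' S \<theta> lam c \<mu>"
proof
  fix \<mu>0
  define T where "T = S c - {c}"
  define k where "k = card T"
  have finT: "finite T" by simp
  have kpos: "k > 0" using S_ne finT by (simp add: k_def T_def card_gt_0_iff)
  have Tsub: "\<And>s. s \<in> T \<Longrightarrow> s \<subseteq> c" using S_sub[OF c_in] by (auto simp: T_def)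
  have Tnc: "\<And>s. s \<in> T \<Longrightarrow> s \<noteq> c" by (auto simp: T_def)
  define A where "A x = hat_theta C \<theta> c x + lam_in C' S lam c x" for x
  define B where "B s x = hat_theta C \<theta> s x - gamma C' S lam s x + lam_minus C' S lam c s x" for s x
  define F where "F x = A x + (\<Sum>s\<in>T. B s x)" for x
  define P where "P = PiE c Vals"
  have finP: "\<And>s. finite (PiE s Vals)" by (simp add: finite_PiE vals_fin)
  have neP: "\<And>s. PiE s Vals \<noteq> {}" by (simp add: PiE_eq_empty_iff vals_ne)
  have Brestr: "B s (restrict x s) = B s x" for s x
    unfolding B_def by (simp only: gamma_restrict[of C' S, OF S_sub] hat_theta_restrict lam_minus_restrict)
  define M where "M = Max (F ` P)"
  have gform: "g_c Vals C C' S \<theta> lam c \<mu> =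
      Max ((\<lambda>x. A x - (\<Sum>s\<in>T. \<mu> s (restrict x s))) ` P)
      + (\<Sum>s\<in>T. Max ((\<lambda>x. B s x + \<mu> s (restrict x s)) ` PiE s Vals))" for \<mu>
  proof -
    let ?l = "upd_block lam c \<mu>"
    have li: "lam_in C' S ?l c x = lam_in C' S lam c x" for x
      unfolding lam_in_def upd_block_def by (rule sum.cong) auto
    have ga: "s \<in> T \<Longrightarrow> gamma C' S ?l s x = gamma C' S lam s x" for s x
      using Tnc[of s] unfolding gamma_def upd_block_def by auto
    have lm: "lam_minus C' S ?l c s x = lam_minus C' S lam c s x" for s x
      unfolding lam_minus_def upd_block_def by (rule sum.cong) auto
    have e1: "(\<lambda>x. hat_theta C \<theta> c x - (\<Sum>s\<in>S c - {c}. ?l c s (restrict x s)) + lam_in C' S ?l c x)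
        = (\<lambda>x. A x - (\<Sum>s\<in>T. \<mu> s (restrict x s)))"
      unfolding li by (rule ext) (simp add: A_def T_def upd_block_def)
    have e2: "(\<Sum>s\<in>S c - {c}. Max ((\<lambda>x. hat_theta C \<theta> s x - gamma C' S ?l s x + lam_minus C' S ?l c s x + ?l c s (restrict x s)) ` PiE s Vals))
        = (\<Sum>s\<in>T. Max ((\<lambda>x. B s x + \<mu> s (restrict x s)) ` PiE s Vals))"
      unfolding T_def[symmetric]
    proof (rule sum.cong[OF refl])
      fix s assume sT: "s \<in> T"
      show "Max ((\<lambda>x. hat_theta C \<theta> s x - gamma C' S ?l s x + lam_minus C' S ?l c s x + ?l c s (restrict x s)) ` PiE s Vals)
          = Max ((\<lambda>x. B s x + \<mu> s (restrict x s)) ` PiE s Vals)"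
        unfolding lm ga[OF sT] by (simp add: B_def upd_block_def)
    qed
    show ?thesis unfolding g_c_def Let_def e1 e2 P_def by simp
  qed
  have finFP: "finite (F ` P)" "F ` P \<noteq> {}" using finP neP by (auto simp: P_def)
  obtain x0 where x0: "x0 \<in> P" "F x0 = M"
    using Max_in[OF finFP] by (auto simp: M_def)
  have lower: "M \<le> g_c Vals C C' S \<theta> lam c \<mu>0"
  proof -
    have "A x0 - (\<Sum>s\<in>T. \<mu>0 s (restrict x0 s)) \<le> Max ((\<lambda>x. A x - (\<Sum>s\<in>T. \<mu>0 s (restrict x s))) ` P)"
      using x0(1) finP by (auto simp: P_def)
    moreover have "(\<Sum>s\<in>T. B s x0 + \<mu>0 s (restrict x0 s)) \<le> (\<Sum>s\<in>T. Max ((\<lambda>x. B s x + \<mu>0 s (restrict x s)) ` PiE s Vals))"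
    proof (rule sum_mono)
      fix s assume sT: "s \<in> T"
      have r: "restrict x0 s \<in> PiE s Vals" using restrict_PiE_sub x0(1) Tsub[OF sT] by (auto simp: P_def)
      have "B s (restrict x0 s) + \<mu>0 s (restrict (restrict x0 s) s) \<le> Max ((\<lambda>x. B s x + \<mu>0 s (restrict x s)) ` PiE s Vals)"
        using r finP by auto
      then show "B s x0 + \<mu>0 s (restrict x0 s) \<le> Max ((\<lambda>x. B s x + \<mu>0 s (restrict x s)) ` PiE s Vals)"
        by (simp add: Brestr)
    qed
    ultimately show ?thesis unfolding gform x0(2)[symmetric] F_def by (simp add: sum.distrib)
  qed
  define ls where "ls = lam_star Vals C C' S \<theta> lam c"
  define m where "m s xs = Max (F ` {x \<in> P. restrict x s = xs})" for s xs
  have ls_eq: "ls s xs = - B s xs + m s xs / k" for s xs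
  proof -
    have "(\<lambda>x. hat_theta C \<theta> c x + lam_in C' S lam c x
                 + (\<Sum>s'\<in>S c - {c}. hat_theta C \<theta> s' x - gamma C' S lam s' x + lam_minus C' S lam c s' x)) = F"
      (is "?f = F") by (rule ext) (simp add: F_def A_def B_def T_def)
    show ?thesis unfolding ls_def lam_star_def m_def B_def k_def T_def P_def
      by (simp only: \<open>?f = F\<close>) simp
  qed
  have mne: "s \<in> T \<Longrightarrow> xs \<in> PiE s Vals \<Longrightarrow> {x \<in> P. restrict x s = xs} \<noteq> {}" for s xs
    using extend_exists[OF _ Tsub vals_ne] by (auto simp: P_def)
  have mfin: "finite (F ` {x \<in> P. restrict x s = xs})" for s xs
    using finP by (auto simp: P_def)
  have m_le: "s \<in> T \<Longrightarrow> xs \<in> PiE s Vals \<Longrightarrow> m s xs \<le> M" for s xs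
    unfolding m_def M_def using mne[of s xs] mfin finFP
    by (intro Max_mono) auto
  have m_ge: "x \<in> P \<Longrightarrow> F x \<le> m s (restrict x s)" for s x
    unfolding m_def using mfin by auto
  have up1: "Max ((\<lambda>x. A x - (\<Sum>s\<in>T. ls s (restrict x s))) ` P) \<le> 0"
  proof -
    have "A x - (\<Sum>s\<in>T. ls s (restrict x s)) \<le> 0" if xP: "x \<in> P" for x
    proof -
      have "(\<Sum>s\<in>T. ls s (restrict x s)) = - (\<Sum>s\<in>T. B s x) + (\<Sum>s\<in>T. m s (restrict x s)) / k"
        by (simp add: ls_eq Brestr sum_subtractf sum_divide_distrib)
      moreover have "(\<Sum>s\<in>T. F x) \<le> (\<Sum>s\<in>T. m s (restrict x s))"
        by (rule sum_mono) (rule m_ge[OF xP])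
      moreover have "(\<Sum>s\<in>T. F x) = k * F x" by (simp add: k_def)
      ultimately have kk: "real k * F x \<le> (\<Sum>s\<in>T. m s (restrict x s))" by (simp only: k_def)
      have "F x \<le> (\<Sum>s\<in>T. m s (restrict x s)) / k"
        using kk kpos by (simp add: pos_le_divide_eq mult.commute)
      with \<open>(\<Sum>s\<in>T. ls s (restrict x s)) = _\<close>
      have "(\<Sum>s\<in>T. ls s (restrict x s)) \<ge> - (\<Sum>s\<in>T. B s x) + F x" by linarith
      then show ?thesis by (simp add: F_def)
    qed
    then show ?thesis using finP neP by (simp add: P_def)
  qed
  have up2: "(\<Sum>s\<in>T. Max ((\<lambda>x. B s x + ls s (restrict x s)) ` PiE s Vals)) \<le> (\<Sum>s\<in>T. M / k)"
  proof (rule sum_mono)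
    fix s assume sT: "s \<in> T"
    have "B s xs + ls s (restrict xs s) \<le> M / k" if xs: "xs \<in> PiE s Vals" for xs
    proof -
      have "restrict xs s = xs" using xs by (simp add: PiE_def extensional_restrict)
      then have "B s xs + ls s (restrict xs s) = m s xs / k" by (simp add: ls_eq)
      also have "\<dots> \<le> M / k" using m_le[OF sT xs] kpos by (simp add: divide_right_mono)
      finally show ?thesis .
    qed
    then show "Max ((\<lambda>x. B s x + ls s (restrict x s)) ` PiE s Vals) \<le> M / k"
      using finP neP by simp
  qed
  have "(\<Sum>s\<in>T. M / k) = M" using kpos by (simp add: k_def card_gt_0_iff)
  then have "g_c Vals C C' S \<theta> lam c ls \<le> M" using gform[of ls] up1 up2 by linarith
  then show "g_c Vals C C' S \<theta> lam c (lam_star Vals C C' S \<theta> lam c) \<le> g_c Vals C C' S \<theta> lam c \<mu>0"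
    using lower by (simp add: ls_def)
qed

end
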